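(* Let $M$ be a reduced irreducible affine scheme of finite type over $\mathbb C$ and let $\Gamma$ be a finitely presented group acting on $M$ by algebraic automorphisms. If there is one point of $M$ whose $\Gamma$-orbit is Zariski dense in $M$, then there is a countable union of proper closed subvarieties of $M$ such that every point $x\in M$ not lying in this countable union has Zariski dense $\Gamma$-orbit. *)

theory Defs
  imports "HOL-Analysis.Finite_Cartesian_Product" "HOL-Algebra.Generated_Groups"
begin

inductive_set polyfun :: "(complex^'n \<Rightarrow> complex) set" where
  pf_const: "(\<lambda>x. c) \<in> polyfun"
| pf_coord: "(\<lambda>x. x $ i) \<in> polyfun"
| pf_add: "p \<in> polyfun \<Longrightarrow> q \<in> polyfun \<Longrightarrow> (\<lambda>x. p x + q x) \<in> polyfun"
| pf_mult: "p \<in> polyfun \<Longrightarrow> q \<in> polyfun \<Longrightarrow> (\<lambda>x. p x * q x) \<in> polyfun"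

definition zclosed :: "(complex^'n) set \<Rightarrow> bool" where
  "zclosed S \<longleftrightarrow> (\<exists>P \<subseteq> polyfun. S = {x. \<forall>p\<in>P. p x = 0})"

definition zclosure :: "(complex^'n) set \<Rightarrow> (complex^'n) set" where
  "zclosure S = \<Inter>{C. zclosed C \<and> S \<subseteq> C}"

definition zirreducible :: "(complex^'n) set \<Rightarrow> bool" where
  "zirreducible M \<longleftrightarrow> M \<noteq> {} \<and>
     (\<forall>A B. zclosed A \<and> zclosed B \<and> M \<subseteq> A \<union> B \<longrightarrow> M \<subseteq> A \<or> M \<subseteq> B)"

definition polymap :: "(complex^'n \<Rightarrow> complex^'n) \<Rightarrow> bool" where
  "polymap F \<longleftrightarrow> (\<forall>i. (\<lambda>x. F x $ i) \<in> polyfun)"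

definition alg_aut :: "(complex^'n) set \<Rightarrow> (complex^'n \<Rightarrow> complex^'n) \<Rightarrow> bool" where
  "alg_aut M f \<longleftrightarrow> (\<exists>F G. polymap F \<and> polymap G \<and> F ` M \<subseteq> M \<and> G ` M \<subseteq> M \<and>
      (\<forall>x\<in>M. G (F x) = x \<and> F (G x) = x) \<and> (\<forall>x\<in>M. f x = F x))"

text \<open>Words in generators 0..n-1: letters (i, b), b = True meaning the inverse letter.\<close>
definition eval_word :: "('g, 'b) monoid_scheme \<Rightarrow> (nat \<Rightarrow> 'g) \<Rightarrow> (nat \<times> bool) list \<Rightarrow> 'g" where
  "eval_word G gen w =
     foldr (\<lambda>(i, b) acc. (if b then inv\<^bsub>G\<^esub> (gen i) else gen i) \<otimes>\<^bsub>G\<^esub> acc) w \<one>\<^bsub>G\<^esub>"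

inductive_set pres_step :: "(nat \<times> bool) list set \<Rightarrow> ((nat \<times> bool) list \<times> (nat \<times> bool) list) set"
  for R where
  ins_pair: "(u @ v, u @ [(i, b), (i, \<not> b)] @ v) \<in> pres_step R"
| ins_rel: "r \<in> R \<Longrightarrow> (u @ v, u @ r @ v) \<in> pres_step R"

definition pres_equiv :: "(nat \<times> bool) list set \<Rightarrow> ((nat \<times> bool) list \<times> (nat \<times> bool) list) set" where
  "pres_equiv R = (pres_step R \<union> (pres_step R)\<inverse>)\<^sup>*"

text \<open>G is finitely presented: generated by finitely many elements gen 0..gen(n-1), and
  a word in them is trivial in G iff it is trivial in the group presented by the finite
  relator set R (i.e. G is isomorphic to the group with presentation gens | R).\<close>
definition fin_presented :: "('g, 'b) monoid_scheme \<Rightarrow> bool" where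
  "fin_presented G \<longleftrightarrow> (\<exists>n gen R. finite R \<and> (\<forall>r\<in>R. fst ` set r \<subseteq> {..<n}) \<and>
     gen ` {..<n} \<subseteq> carrier G \<and> carrier G = generate G (gen ` {..<n}) \<and>
     (\<forall>w. fst ` set w \<subseteq> {..<n} \<longrightarrow>
          (eval_word G gen w = \<one>\<^bsub>G\<^esub> \<longleftrightarrow> (w, []) \<in> pres_equiv R)))"

end

theory Submission
  imports Defs "Jordan_Normal_Form.Determinant" "HOL-Library.Countable"
begin


definition monom :: "('n::finite \<Rightarrow> nat) \<Rightarrow> complex^'n \<Rightarrow> complex" where
  "monom a x = (\<Prod>i\<in>UNIV. (x $ i) ^ (a i))"

lemma pf_sum: "finite S \<Longrightarrow> (\<And>a. a \<in> S \<Longrightarrow> f a \<in> polyfun) \<Longrightarrow> (\<lambda>x. \<Sum>a\<in>S. f a x) \<in> polyfun"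
proof (induction S rule: finite_induct)
  case empty then show ?case using pf_const[of 0] by simp
next
  case (insert a S) then show ?case using pf_add[of "f a" "\<lambda>x. \<Sum>a\<in>S. f a x"] by simp
qed

lemma pf_prod: "finite S \<Longrightarrow> (\<And>a. a \<in> S \<Longrightarrow> f a \<in> polyfun) \<Longrightarrow> (\<lambda>x. \<Prod>a\<in>S. f a x) \<in> polyfun"
proof (induction S rule: finite_induct)
  case empty then show ?case using pf_const[of 1] by simp
next
  case (insert a S) then show ?case using pf_mult[of "f a" "\<lambda>x. \<Prod>a\<in>S. f a x"] by simp
qed

lemma pf_power: "p \<in> polyfun \<Longrightarrow> (\<lambda>x. p x ^ k) \<in> polyfun"
proof (induction k)
  case 0 then show ?case using pf_const[of 1] by simp
next
  case (Suc k) then show ?case using pf_mult[of p "\<lambda>x. p x ^ k"] by simp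
qed

lemma pf_mono: "monom a \<in> polyfun"
proof -
  have "(\<lambda>x. \<Prod>i\<in>UNIV. (x $ i) ^ (a i)) \<in> polyfun"
    by (rule pf_prod) (auto intro: pf_power pf_coord)
  then show ?thesis unfolding monom_def[abs_def] .
qed

lemma pf_cmult: "p \<in> polyfun \<Longrightarrow> (\<lambda>x. c * p x) \<in> polyfun"
  using pf_mult[OF pf_const] by blast

lemma pf_comp: "p \<in> polyfun \<Longrightarrow> polymap F \<Longrightarrow> (\<lambda>x. p (F x)) \<in> polyfun"
proof (induction p rule: polyfun.induct)
  case (pf_const c) show ?case by (rule polyfun.pf_const)
next
  case (pf_coord i) then show ?case unfolding polymap_def by blast
next
  case (pf_add p q) then show ?case using polyfun.pf_add by blast
next
  case (pf_mult p q) then show ?case using polyfun.pf_mult by blast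
qed

lemma zclosed_zero: "p \<in> polyfun \<Longrightarrow> zclosed {x. p x = 0}"
  unfolding zclosed_def by (rule exI[of _ "{p}"]) auto

lemma zclosed_Int: "zclosed A \<Longrightarrow> zclosed B \<Longrightarrow> zclosed (A \<inter> B)"
  unfolding zclosed_def
proof (elim exE conjE)
  fix P Q assume "P \<subseteq> polyfun" "A = {x. \<forall>p\<in>P. p x = 0}" "Q \<subseteq> polyfun" "B = {x. \<forall>p\<in>Q. p x = 0}"
  then show "\<exists>R\<subseteq>polyfun. A \<inter> B = {x. \<forall>p\<in>R. p x = 0}"
    by (intro exI[of _ "P \<union> Q"]) auto
qed

lemma zclosure_least: "zclosed C \<Longrightarrow> S \<subseteq> C \<Longrightarrow> zclosure S \<subseteq> C"
  unfolding zclosure_def by blast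

lemma not_dense_poly:
  assumes "zclosed M" "S \<subseteq> M" "zclosure S \<noteq> M"
  shows "\<exists>p\<in>polyfun. (\<forall>s\<in>S. p s = 0) \<and> (\<exists>y\<in>M. p y \<noteq> 0)"
proof -
  have "zclosure S \<subseteq> M" using assms zclosure_least by blast
  then obtain y where y: "y \<in> M" "y \<notin> zclosure S" using assms(3) by blast
  then obtain C where C: "zclosed C" "S \<subseteq> C" "y \<notin> C" unfolding zclosure_def by blast
  then obtain P where P: "P \<subseteq> polyfun" "C = {x. \<forall>p\<in>P. p x = 0}" unfolding zclosed_def by blast
  then obtain p where "p \<in> P" "p y \<noteq> 0" using C by blast
  then show ?thesis using P C y by blast
qed

lemma mono_add: "monom (\<lambda>i. a i + b i) x = monom a x * monom b x"
  unfolding monom_def by (simp add: power_add prod.distrib)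



lemma mono_coord: "monom (\<lambda>j. if j = i then 1 else 0) x = x $ i"
proof -
  have "monom (\<lambda>j. if j = i then 1 else 0) x = (\<Prod>j\<in>UNIV. if j = i then x $ j else 1)"
    unfolding monom_def by (intro prod.cong refl) simp
  also have "\<dots> = x $ i" by (subst prod.delta) simp_all
  finally show ?thesis .
qed
lemma mono_zero: "monom (\<lambda>_. 0) x = 1" unfolding monom_def by simp
lemma poly_expand:
  assumes "p \<in> polyfun"
  shows "\<exists>F c. finite F \<and> (\<forall>x. p x = (\<Sum>a\<in>F. c a * monom a x))"
  using assms
proof (induction p rule: polyfun.induct)
  case (pf_const c)
  show ?case by (rule exI[of _ "{\<lambda>_. 0}"], rule exI[of _ "\<lambda>_. c"]) (simp add: mono_zero)
next
  case (pf_coord i)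
  show ?case
    by (rule exI[of _ "{\<lambda>j. if j = i then 1 else 0}"], rule exI[of _ "\<lambda>_. 1"])
       (simp add: mono_coord)
next
  case (pf_add p q)
  then obtain F c G d where FG: "finite F" "\<forall>x. p x = (\<Sum>a\<in>F. c a * monom a x)"
    "finite G" "\<forall>x. q x = (\<Sum>a\<in>G. d a * monom a x)" by blast
  let ?c = "\<lambda>a. (if a \<in> F then c a else 0) + (if a \<in> G then d a else 0)"
  have E: "\<forall>x. p x + q x = (\<Sum>a\<in>F\<union>G. ?c a * monom a x)"
  proof
    fix x
    have "(\<Sum>a\<in>F\<union>G. ?c a * monom a x) = (\<Sum>a\<in>F\<union>G. (if a \<in> F then c a * monom a x else 0)) + (\<Sum>a\<in>F\<union>G. (if a \<in> G then d a * monom a x else 0))"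
      by (subst sum.distrib[symmetric]) (rule sum.cong, auto simp: distrib_right)
    also have "\<dots> = (\<Sum>a\<in>F. c a * monom a x) + (\<Sum>a\<in>G. d a * monom a x)"
    proof -
      have "(\<Sum>a\<in>F\<union>G. (if a \<in> F then c a * monom a x else 0)) = (\<Sum>a\<in>F. c a * monom a x)"
        using FG(1,3) by (intro sum.mono_neutral_cong_right) auto
      moreover have "(\<Sum>a\<in>F\<union>G. (if a \<in> G then d a * monom a x else 0)) = (\<Sum>a\<in>G. d a * monom a x)"
        using FG(1,3) by (intro sum.mono_neutral_cong_right) auto
      ultimately show ?thesis by simp
    qed
    finally show "p x + q x = (\<Sum>a\<in>F\<union>G. ?c a * monom a x)" by (simp only: FG(2)[rule_format] FG(4)[rule_format])
  qed
  show ?case using FG(1,3) E by (intro exI[of _ "F \<union> G"] exI[of _ ?c] conjI) simp_all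
next
  case (pf_mult p q)
  then obtain F c G d where FG: "finite F" "\<forall>x. p x = (\<Sum>a\<in>F. c a * monom a x)"
    "finite G" "\<forall>x. q x = (\<Sum>a\<in>G. d a * monom a x)" by blast
  let ?H = "(\<lambda>(a,b). \<lambda>i. a i + b i) ` (F \<times> G)"
  let ?e = "\<lambda>h. \<Sum>ab\<in>{ab\<in>F\<times>G. (\<lambda>i. fst ab i + snd ab i) = h}. c (fst ab) * d (snd ab)"
  have E: "\<forall>x. p x * q x = (\<Sum>h\<in>?H. ?e h * monom h x)"
  proof
    fix x
    have "p x * q x = (\<Sum>ab\<in>F\<times>G. c (fst ab) * d (snd ab) * monom ((\<lambda>i. fst ab i + snd ab i)) x)"
    proof -
      have "p x * q x = (\<Sum>a\<in>F. \<Sum>b\<in>G. (c a * monom a x) * (d b * monom b x))"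
        by (simp only: FG(2)[rule_format] FG(4)[rule_format] sum_product)
      also have "\<dots> = (\<Sum>ab\<in>F\<times>G. (c (fst ab) * monom (fst ab) x) * (d (snd ab) * monom (snd ab) x))"
        by (simp add: sum.cartesian_product split_beta)
      also have "\<dots> = (\<Sum>ab\<in>F\<times>G. c (fst ab) * d (snd ab) * monom (\<lambda>i. fst ab i + snd ab i) x)"
        by (intro sum.cong refl) (simp only: mono_add mult.assoc mult.left_commute)
      finally show ?thesis .
    qed
    also have "\<dots> = (\<Sum>h\<in>?H. \<Sum>ab\<in>{ab\<in>F\<times>G. (\<lambda>(a,b). \<lambda>i. a i + b i) ab = h}. c (fst ab) * d (snd ab) * monom ((\<lambda>i. fst ab i + snd ab i)) x)"
      using FG(1,3) by (intro sum.image_gen) auto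
    also have "\<dots> = (\<Sum>h\<in>?H. ?e h * monom h x)"
      by (intro sum.cong refl) (auto simp: sum_distrib_right split_beta intro!: sum.cong)
    finally show "p x * q x = (\<Sum>h\<in>?H. ?e h * monom h x)" .
  qed
  show ?case using FG(1,3) E by (intro exI[of _ ?H] exI[of _ ?e] conjI) simp_all
qed



lemma mat_vec_idx: "i < s \<Longrightarrow> w \<in> carrier_vec s \<Longrightarrow>
   (mat s s f *\<^sub>v w) $ i = (\<Sum>j<s. f (i,j) * w $ j)"
  by (simp add: scalar_prod_def atLeast0LessThan)

lemma det_kernel:
  fixes f :: "nat \<times> nat \<Rightarrow> complex"
  shows "det (mat s s f) = 0 \<longleftrightarrow> (\<exists>v. (\<exists>j<s. v j \<noteq> 0) \<and> (\<forall>i<s. (\<Sum>j<s. f (i,j) * v j) = 0))"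
proof -
  have A: "mat s s f \<in> carrier_mat s s" by simp
  show ?thesis
  proof
    assume "det (mat s s f) = 0"
    then obtain v where v: "v \<in> carrier_vec s" "v \<noteq> 0\<^sub>v s" "mat s s f *\<^sub>v v = 0\<^sub>v s"
      using det_0_iff_vec_prod_zero[OF A] by blast
    have "\<exists>j<s. v $ j \<noteq> 0"
    proof (rule ccontr)
      assume "\<not> ?thesis"
      then have "v = 0\<^sub>v s" using v(1) by (intro eq_vecI) auto
      then show False using v(2) by simp
    qed
    moreover have "\<forall>i<s. (\<Sum>j<s. f (i,j) * v $ j) = 0"
    proof (intro allI impI)
      fix i assume "i < s"
      then have "(mat s s f *\<^sub>v v) $ i = 0" using v(3) by simp
      then show "(\<Sum>j<s. f (i,j) * v $ j) = 0" using mat_vec_idx[OF \<open>i < s\<close> v(1)] by simp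
    qed
    ultimately show "\<exists>v. (\<exists>j<s. v j \<noteq> 0) \<and> (\<forall>i<s. (\<Sum>j<s. f (i,j) * v j) = 0)" by blast
  next
    assume "\<exists>v. (\<exists>j<s. v j \<noteq> 0) \<and> (\<forall>i<s. (\<Sum>j<s. f (i,j) * v j) = 0)"
    then obtain v j where v: "j < s" "v j \<noteq> 0" "\<forall>i<s. (\<Sum>j<s. f (i,j) * v j) = 0" by blast
    let ?w = "vec s v"
    have w: "?w \<in> carrier_vec s" by simp
    have "?w \<noteq> 0\<^sub>v s" using v(1,2) by (metis index_vec index_zero_vec(1))
    moreover have "mat s s f *\<^sub>v ?w = 0\<^sub>v s"
    proof (rule eq_vecI)
      fix i assume "i < dim_vec (0\<^sub>v s)"
      then have i: "i < s" by simp
      have "(mat s s f *\<^sub>v ?w) $ i = (\<Sum>j<s. f (i,j) * ?w $ j)" using mat_vec_idx[OF i w] .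
      also have "\<dots> = (\<Sum>j<s. f (i,j) * v j)" by (intro sum.cong refl) simp
      finally show "(mat s s f *\<^sub>v ?w) $ i = 0\<^sub>v s $ i" using v(3) i by simp
    qed simp
    ultimately show "det (mat s s f) = 0" using det_0_iff_vec_prod_zero[OF A] w by blast
  qed
qed

lemma det_solve:
  fixes f :: "nat \<times> nat \<Rightarrow> complex"
  assumes "det (mat s s f) \<noteq> 0"
  shows "\<exists>a. \<forall>i<s. (\<Sum>j<s. f (i,j) * a j) = u i"
proof -
  let ?A = "mat s s f"
  have A: "?A \<in> carrier_mat s s" by simp
  from det_non_zero_imp_unit[OF A assms, of "()"]
  obtain B where B: "B \<in> carrier_mat s s" "?A * B = 1\<^sub>m s"
    unfolding Units_def ring_mat_def by auto
  let ?a = "B *\<^sub>v vec s u"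
  have a: "?a \<in> carrier_vec s" using B by simp
  have "?A *\<^sub>v ?a = (?A * B) *\<^sub>v vec s u"
    using B by (intro assoc_mult_mat_vec[symmetric, OF A]) auto
  also have "\<dots> = vec s u" unfolding B(2) by simp
  finally have eq: "?A *\<^sub>v ?a = vec s u" .
  show ?thesis
  proof (intro exI[of _ "\<lambda>j. ?a $ j"] allI impI)
    fix i assume i: "i < s"
    have "(\<Sum>j<s. f (i,j) * ?a $ j) = (?A *\<^sub>v ?a) $ i" using mat_vec_idx[OF i a] by simp
    also have "\<dots> = u i" using eq i by simp
    finally show "(\<Sum>j<s. f (i,j) * ?a $ j) = u i" .
  qed
qed



definition Dm :: "('n::finite \<Rightarrow> nat) list \<Rightarrow> 'g list \<Rightarrow> ('g \<Rightarrow> complex^'n) \<Rightarrow> complex" where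
  "Dm bs gs phi = det (mat (length bs) (length bs) (\<lambda>(i,j). monom (bs!j) (phi (gs!i))))"

definition Good :: "('n::finite \<Rightarrow> nat) list \<Rightarrow> 'g set \<Rightarrow> ('g \<Rightarrow> complex^'n) \<Rightarrow> ('n \<Rightarrow> nat) list \<times> 'g list \<Rightarrow> bool" where
  "Good L Gc phi bg \<longleftrightarrow> set (fst bg) \<subseteq> set L \<and> set (snd bg) \<subseteq> Gc \<and>
     length (snd bg) = length (fst bg) \<and> Dm (fst bg) (snd bg) phi \<noteq> 0"

lemma Dm_distinct:
  assumes "Dm bs gs phi \<noteq> 0" shows "distinct bs"
proof (rule ccontr)
  assume "\<not> distinct bs"
  then obtain a b where ab: "a < length bs" "b < length bs" "a \<noteq> b" "bs ! a = bs ! b"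
    by (metis distinct_conv_nth)
  let ?s = "length bs"
  let ?f = "\<lambda>(i,j). monom (bs!j) (phi (gs!i))"
  let ?v = "\<lambda>j. (if j = a then 1 else 0) - (if j = b then 1 else (0::complex))"
  have K: "\<forall>i<?s. (\<Sum>j<?s. ?f (i,j) * ?v j) = 0"
  proof (intro allI impI)
    fix i assume "i < ?s"
    have "(\<Sum>j<?s. ?f (i,j) * ?v j) = (\<Sum>j<?s. (if j = a then ?f (i,j) else 0) - (if j = b then ?f (i,j) else 0))"
      by (intro sum.cong refl) (simp add: right_diff_distrib)
    also have "\<dots> = ?f (i,a) - ?f (i,b)" using ab(1,2) by (simp only: sum_subtractf sum.delta finite_lessThan lessThan_iff if_True)
    also have "\<dots> = 0" using ab by simp
    finally show "(\<Sum>j<?s. ?f (i,j) * ?v j) = 0" .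
  qed
  have "?v a \<noteq> 0" using ab(3) by simp
  then have J: "\<exists>j<?s. ?v j \<noteq> 0" using ab(1) by blast
  have "\<exists>v. (\<exists>j<?s. v j \<noteq> 0) \<and> (\<forall>i<?s. (\<Sum>j<?s. ?f (i,j) * v j) = 0)"
    by (rule exI[of _ ?v]) (rule conjI[OF J K])
  then have "det (mat ?s ?s ?f) = 0" by (simp only: det_kernel)
  then show False using assms unfolding Dm_def by (simp only:)
qed

lemma det_mat0: "det (mat 0 0 f) = (1::complex)"
proof -
  have "mat 0 0 f = (1\<^sub>m 0 :: complex mat)" by (rule eq_matI) auto
  then show ?thesis by (simp only: det_one)
qed

lemma Good_nil: "Good L Gc phi ([], [])"
  unfolding Good_def Dm_def by (simp add: det_mat0)

lemma Good_max: "\<exists>bg. Good L Gc phi bg \<and> (\<forall>bg'. Good L Gc phi bg' \<longrightarrow> length (fst bg') \<le> length (fst bg))"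
proof -
  have b: "\<forall>y. Good L Gc phi y \<longrightarrow> length (fst y) < Suc (card (set L))"
  proof (intro allI impI)
    fix y assume "Good L Gc phi y"
    then have "distinct (fst y)" "set (fst y) \<subseteq> set L" using Dm_distinct unfolding Good_def by blast+
    then show "length (fst y) < Suc (card (set L))"
      using card_mono[of "set L" "set (fst y)"] distinct_card[of "fst y"] by simp
  qed
  show ?thesis
    using ex_has_greatest_nat[of "Good L Gc phi" "([],[])" "\<lambda>bg. length (fst bg)" "Suc (card (set L))", OF Good_nil b] .
qed



lemma border:
  assumes G: "Good L Gc phi (bs,gs)"
    and mx: "\<forall>bg'. Good L Gc phi bg' \<longrightarrow> length (fst bg') \<le> length bs"
    and k: "k \<in> set L"
  shows "\<exists>a. \<forall>g\<in>Gc. monom k (phi g) = (\<Sum>j<length bs. a j * monom (bs!j) (phi g))"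
proof -
  define s where "s = length bs"
  define f where "f = (\<lambda>(i,j). monom (bs!j) (phi (gs!i)))"
  have fij: "f (i,j) = monom (bs!j) (phi (gs!i))" for i j unfolding f_def by simp
  have len: "length gs = s" "set bs \<subseteq> set L" "set gs \<subseteq> Gc" using G unfolding Good_def s_def by auto
  have d: "det (mat s s f) \<noteq> 0" using G unfolding Good_def Dm_def s_def f_def by simp
  obtain a where a: "\<forall>i<s. (\<Sum>j<s. f (i,j) * a j) = monom k (phi (gs!i))"
    using det_solve[OF d, of "\<lambda>i. monom k (phi (gs!i))"] by blast
  have inj: "\<forall>j<s. w j = 0" if "\<forall>i<s. (\<Sum>j<s. f (i,j) * w j) = 0" for w
    using d det_kernel[of s f] that by blast
  show ?thesis
  proof (rule exI[of _ a], rule ballI, rule ccontr)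
    fix g assume g: "g \<in> Gc" and ne: "monom k (phi g) \<noteq> (\<Sum>j<length bs. a j * monom (bs!j) (phi g))"
    define bs' where "bs' = bs @ [k]"
    define gs' where "gs' = gs @ [g]"
    define f' where "f' = (\<lambda>(i,j). monom (bs'!j) (phi (gs'!i)))"
    have f'ij: "f' (i,j) = monom (bs'!j) (phi (gs'!i))" for i j unfolding f'_def by simp
    have lb: "length bs' = Suc s" unfolding bs'_def s_def by simp
    have f'1: "f' (i,j) = f (i,j)" if "i < s" "j < s" for i j
      using that len unfolding f'ij fij bs'_def gs'_def s_def by (simp add: nth_append)
    have f'2: "f' (i,s) = monom k (phi (gs!i))" if "i < s" for i
      using that len unfolding f'ij bs'_def gs'_def s_def by (simp add: nth_append)
    have f'3: "f' (s,j) = monom (bs!j) (phi g)" if "j < s" for j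
      using that len unfolding f'ij bs'_def gs'_def s_def by (simp add: nth_append)
    have f'4: "f' (s,s) = monom k (phi g)"
      using len unfolding f'ij bs'_def gs'_def s_def by (simp add: nth_append)
    have "det (mat (Suc s) (Suc s) f') \<noteq> 0"
    proof
      assume "det (mat (Suc s) (Suc s) f') = 0"
      then obtain v j0 where v: "j0 < Suc s" "v j0 \<noteq> 0"
        "\<forall>i<Suc s. (\<Sum>j<Suc s. f' (i,j) * v j) = 0"
        using det_kernel[of "Suc s" f'] by blast
      define w where "w = (\<lambda>j. v j + v s * a j)"
      have "\<forall>i<s. (\<Sum>j<s. f (i,j) * w j) = 0"
      proof (intro allI impI)
        fix i assume i: "i < s"
        have "0 = (\<Sum>j<Suc s. f' (i,j) * v j)" using v(3) i by simp
        also have "\<dots> = (\<Sum>j<s. f (i,j) * v j) + monom k (phi (gs!i)) * v s"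
          using i by (simp add: f'1 f'2)
        also have "\<dots> = (\<Sum>j<s. f (i,j) * v j) + (\<Sum>j<s. f (i,j) * a j) * v s"
          using a i by simp
        also have "\<dots> = (\<Sum>j<s. f (i,j) * w j)"
          unfolding w_def by (simp add: sum_distrib_right sum_distrib_left sum.distrib distrib_left mult_ac)
        finally show "(\<Sum>j<s. f (i,j) * w j) = 0" by simp
      qed
      then have w0: "\<forall>j<s. w j = 0" by (rule inj)
      then have vj: "v j = - (v s * a j)" if "j < s" for j
        using that unfolding w_def by (simp add: eq_neg_iff_add_eq_0)
      have "0 = (\<Sum>j<Suc s. f' (s,j) * v j)" using v(3) by simp
      also have "\<dots> = (\<Sum>j<s. monom (bs!j) (phi g) * v j) + monom k (phi g) * v s"
        by (simp add: f'3 f'4)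
      also have "\<dots> = (\<Sum>j<s. monom (bs!j) (phi g) * (- (v s * a j))) + monom k (phi g) * v s"
        by (simp add: vj)
      also have "\<dots> = v s * (monom k (phi g) - (\<Sum>j<s. a j * monom (bs!j) (phi g)))"
        by (simp add: sum_distrib_left right_diff_distrib sum_negf mult_ac)
      finally have "v s * (monom k (phi g) - (\<Sum>j<s. a j * monom (bs!j) (phi g))) = 0" by simp
      then have vs: "v s = 0" using ne unfolding s_def by simp
      have "v j0 = 0"
      proof (cases "j0 < s")
        case True then show ?thesis using vj vs by simp
      next
        case False then have "j0 = s" using v(1) by simp
        then show ?thesis using vs by simp
      qed
      then show False using v(2) by simp
    qed
    then have "Good L Gc phi (bs', gs')"
      using len k g s_def unfolding Good_def Dm_def lb f'_def bs'_def gs'_def by auto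
    then have "length bs' \<le> length bs" using mx by auto
    then show False using lb unfolding s_def by simp
  qed
qed



lemma det_poly:
  assumes "\<And>i j. i < s \<Longrightarrow> j < s \<Longrightarrow> e i j \<in> polyfun"
  shows "(\<lambda>x. det (mat s s (\<lambda>(i,j). e i j x))) \<in> polyfun"
proof -
  have eq: "det (mat s s (\<lambda>(i,j). e i j x)) =
     (\<Sum>p\<in>{p. p permutes {0..<s}}. signof p * (\<Prod>i\<in>{0..<s}. e i (p i) x))" for x
  proof -
    have "det (mat s s (\<lambda>(i,j). e i j x)) =
       (\<Sum>p\<in>{p. p permutes {0..<s}}. signof p * (\<Prod>i = 0..<s. mat s s (\<lambda>(i,j). e i j x) $$ (i, p i)))"
      by (rule det_def') simp
    also have "\<dots> = (\<Sum>p\<in>{p. p permutes {0..<s}}. signof p * (\<Prod>i\<in>{0..<s}. e i (p i) x))"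
    proof (intro sum.cong refl arg_cong2[where f = "(*)"] prod.cong)
      fix p i assume p: "p \<in> {p. p permutes {0..<s}}" and i: "i \<in> {0..<s}"
      then have "p i < s" using permutes_in_image[of p "{0..<s}" i] by simp
      then show "mat s s (\<lambda>(i,j). e i j x) $$ (i, p i) = e i (p i) x" using i by simp
    qed
    finally show ?thesis .
  qed
  have "(\<lambda>x. \<Sum>p\<in>{p. p permutes {0..<s}}. signof p * (\<Prod>i\<in>{0..<s}. e i (p i) x)) \<in> polyfun"
  proof (rule pf_sum)
    show "finite {p. p permutes {0..<s}}" by (rule finite_permutations) simp
    fix p assume p: "p \<in> {p. p permutes {0..<s}}"
    show "(\<lambda>x. signof p * (\<Prod>i\<in>{0..<s}. e i (p i) x)) \<in> polyfun"
    proof (rule pf_cmult, rule pf_prod)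
      fix i assume i: "i \<in> {0..<s}"
      then have "p i < s" using p permutes_in_image[of p "{0..<s}" i] by simp
      then show "e i (p i) \<in> polyfun" using assms i by simp
    qed simp
  qed
  then show ?thesis unfolding eq .
qed

lemma pf_diff_comb:
  assumes "finite S"
  shows "(\<lambda>z. monom k z - (\<Sum>j\<in>S. a j * monom (b j) z)) \<in> polyfun"
proof -
  have "(\<lambda>z. monom k z + (-1) * (\<Sum>j\<in>S. a j * monom (b j) z)) \<in> polyfun"
    by (intro pf_add pf_mono pf_cmult pf_sum assms)
  then show ?thesis by simp
qed



theorem lemma2p1:
  fixes M :: "(complex^'n) set"
    and G :: "('g, 'b) monoid_scheme"
    and act :: "'g \<Rightarrow> complex^'n \<Rightarrow> complex^'n"
  assumes "zclosed M" and "zirreducible M"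
    and "group G" and "fin_presented G"
    and "\<And>g. g \<in> carrier G \<Longrightarrow> alg_aut M (act g)"
    and "\<And>x. x \<in> M \<Longrightarrow> act \<one>\<^bsub>G\<^esub> x = x"
    and "\<And>g h x. g \<in> carrier G \<Longrightarrow> h \<in> carrier G \<Longrightarrow> x \<in> M \<Longrightarrow>
           act (g \<otimes>\<^bsub>G\<^esub> h) x = act g (act h x)"
    and "\<exists>x0\<in>M. zclosure {act g x0 | g. g \<in> carrier G} = M"
  shows "\<exists>Y :: nat \<Rightarrow> (complex^'n) set.
           (\<forall>k. zclosed (Y k) \<and> Y k \<subset> M) \<and>
           (\<forall>x\<in>M - (\<Union>k. Y k). zclosure {act g x | g. g \<in> carrier G} = M)"
proof -
  obtain x0 where x0: "x0 \<in> M" "zclosure {act g x0 | g. g \<in> carrier G} = M" using assms(8) by blast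
  define Gc where "Gc = carrier G"
  define Fg where "Fg g = (SOME F. polymap F \<and> (\<forall>x\<in>M. act g x = F x))" for g
  have Fg: "polymap (Fg g) \<and> (\<forall>x\<in>M. act g x = Fg g x)" if "g \<in> Gc" for g
  proof -
    have "\<exists>F. polymap F \<and> (\<forall>x\<in>M. act g x = F x)"
      using assms(5)[of g] that unfolding alg_aut_def Gc_def by blast
    then show ?thesis unfolding Fg_def by (rule someI_ex)
  qed
  have inM: "act g x \<in> M" if g: "g \<in> Gc" and xm: "x \<in> M" for g x
  proof -
    obtain F where "F ` M \<subseteq> M" "\<forall>x\<in>M. act g x = F x"
      using assms(5)[of g] g unfolding alg_aut_def Gc_def by blast
    then show ?thesis using xm by auto
  qed
  define phi0 where "phi0 = (\<lambda>g. act g x0)"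
  define BG where "BG L = (SOME bg. Good L Gc phi0 bg \<and> (\<forall>bg'. Good L Gc phi0 bg' \<longrightarrow> length (fst bg') \<le> length (fst bg)))"
    for L :: "('n \<Rightarrow> nat) list"
  have BG: "Good L Gc phi0 (BG L) \<and> (\<forall>bg'. Good L Gc phi0 bg' \<longrightarrow> length (fst bg') \<le> length (fst (BG L)))" for L
    unfolding BG_def by (rule someI_ex) (rule Good_max)
  define P where "P L = (\<lambda>x. det (mat (length (fst (BG L))) (length (fst (BG L)))
      (\<lambda>(i,j). monom (fst (BG L) ! j) (Fg (snd (BG L) ! i) x))))" for L
  define YL where "YL L = M \<inter> {x. P L x = 0}" for L
  define Y where "Y k = YL (from_nat k)" for k
  have gsG: "snd (BG L) ! i \<in> Gc" if "i < length (fst (BG L))" for L i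
    using BG[of L] that unfolding Good_def by auto
  have Ppoly: "P L \<in> polyfun" for L
    unfolding P_def
    by (rule det_poly[where e = "\<lambda>i j x. monom (fst (BG L) ! j) (Fg (snd (BG L) ! i) x)"])
       (rule pf_comp[OF pf_mono conjunct1[OF Fg[OF gsG]]], simp)
  have YLc: "zclosed (YL L)" for L
    unfolding YL_def by (intro zclosed_Int assms(1) zclosed_zero Ppoly)
  have x0P: "P L x0 \<noteq> 0" for L
  proof -
    have "P L x0 = Dm (fst (BG L)) (snd (BG L)) phi0"
      unfolding P_def Dm_def phi0_def
      by (intro arg_cong[where f = det] cong_mat refl) (simp add: conjunct2[OF Fg[OF gsG]] x0(1))
    then show ?thesis using BG[of L] unfolding Good_def by simp
  qed
  have YLp: "YL L \<subset> M" for L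
    using x0P[of L] x0(1) unfolding YL_def by blast
  have bad: "\<exists>L. x \<in> YL L" if x: "x \<in> M" and nd: "zclosure {act g x | g. g \<in> carrier G} \<noteq> M" for x
  proof -
    have sub: "{act g x | g. g \<in> carrier G} \<subseteq> M" using inM x unfolding Gc_def by blast
    obtain p y where p: "p \<in> polyfun" "\<forall>s\<in>{act g x | g. g \<in> carrier G}. p s = 0" "y \<in> M" "p y \<noteq> 0"
      using not_dense_poly[OF assms(1) sub nd] by blast
    obtain F c where Fc: "finite F" "\<forall>x. p x = (\<Sum>a\<in>F. c a * monom a x)"
      using poly_expand[OF p(1)] by blast
    obtain L where L: "set L = F" using finite_list[OF Fc(1)] by blast
    define bs where "bs = fst (BG L)"
    define gs where "gs = snd (BG L)"
    define s where "s = length bs"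
    have Gd: "Good L Gc phi0 (bs, gs)" and mx: "\<forall>bg'. Good L Gc phi0 bg' \<longrightarrow> length (fst bg') \<le> length bs"
      using BG[of L] unfolding bs_def gs_def by auto
    have "\<forall>k\<in>set L. \<exists>a. \<forall>g\<in>Gc. monom k (phi0 g) = (\<Sum>j<length bs. a j * monom (bs!j) (phi0 g))"
      using border[OF Gd mx] by blast
    from bchoice[OF this] obtain A where A: "\<forall>k\<in>set L. \<forall>g\<in>Gc. monom k (phi0 g) = (\<Sum>j<s. A k j * monom (bs!j) (phi0 g))"
      unfolding s_def by blast
    have rel: "monom k z = (\<Sum>j<s. A k j * monom (bs!j) z)" if k: "k \<in> F" and z: "z \<in> M" for k z
    proof -
      let ?Z = "{z. monom k z - (\<Sum>j<s. A k j * monom (bs!j) z) = 0}"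
      have "zclosed ?Z" by (intro zclosed_zero pf_diff_comb) simp
      moreover have "{act g x0 | g. g \<in> carrier G} \<subseteq> ?Z"
        using A k L unfolding phi0_def Gc_def by auto
      ultimately have "zclosure {act g x0 | g. g \<in> carrier G} \<subseteq> ?Z" by (rule zclosure_least)
      then have "M \<subseteq> ?Z" unfolding x0(2) .
      then show ?thesis using z by auto
    qed
    define b where "b j = (\<Sum>a\<in>F. c a * A a j)" for j
    have pz: "p z = (\<Sum>j<s. b j * monom (bs!j) z)" if z: "z \<in> M" for z
    proof -
      have "p z = (\<Sum>a\<in>F. c a * monom a z)" using Fc(2) by simp
      also have "\<dots> = (\<Sum>a\<in>F. c a * (\<Sum>j<s. A a j * monom (bs!j) z))"
        by (rule sum.cong[OF refl], rule arg_cong[where f = "(*) _"], rule rel[OF _ z])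
      also have "\<dots> = (\<Sum>a\<in>F. \<Sum>j<s. c a * A a j * monom (bs!j) z)"
        by (simp add: sum_distrib_left mult_ac)
      also have "\<dots> = (\<Sum>j<s. \<Sum>a\<in>F. c a * A a j * monom (bs!j) z)"
        by (rule sum.swap)
      also have "\<dots> = (\<Sum>j<s. b j * monom (bs!j) z)"
        unfolding b_def by (simp add: sum_distrib_right)
      finally show ?thesis .
    qed
    have bnz: "\<exists>j<s. b j \<noteq> 0"
    proof (rule ccontr)
      assume "\<not> ?thesis"
      then have "p y = 0" using pz[OF p(3)] by simp
      then show False using p(4) by simp
    qed
    have lg: "length gs = s" using Gd unfolding Good_def s_def by simp
    have gsi: "gs ! i \<in> Gc" if "i < s" for i using Gd that lg unfolding Good_def by auto
    have ker: "\<forall>i<s. (\<Sum>j<s. (\<lambda>(i,j). monom (bs!j) (Fg (gs!i) x)) (i,j) * b j) = 0"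
    proof (intro allI impI)
      fix i assume i: "i < s"
      have ai: "act (gs!i) x \<in> M" using inM[OF gsi[OF i] x] .
      have "act (gs!i) x \<in> {act g x | g. g \<in> carrier G}" using gsi[OF i] unfolding Gc_def by blast
      then have "p (act (gs!i) x) = 0" using p(2) by blast
      then have "(\<Sum>j<s. b j * monom (bs!j) (act (gs!i) x)) = 0" using pz[OF ai] by simp
      moreover have "act (gs!i) x = Fg (gs!i) x" using Fg[OF gsi[OF i]] x by blast
      ultimately show "(\<Sum>j<s. (\<lambda>(i,j). monom (bs!j) (Fg (gs!i) x)) (i,j) * b j) = 0"
        by (simp add: mult_ac)
    qed
    have "\<exists>v. (\<exists>j<s. v j \<noteq> 0) \<and> (\<forall>i<s. (\<Sum>j<s. (\<lambda>(i,j). monom (bs!j) (Fg (gs!i) x)) (i,j) * v j) = 0)"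
      by (rule exI[of _ b]) (rule conjI[OF bnz ker])
    then have "det (mat s s (\<lambda>(i,j). monom (bs!j) (Fg (gs!i) x))) = 0"
      by (simp only: det_kernel)
    then have "P L x = 0"
      unfolding P_def bs_def[symmetric] gs_def[symmetric] s_def[symmetric] .
    then show ?thesis using x unfolding YL_def by blast
  qed
  show ?thesis
  proof (intro exI[of _ Y] conjI allI ballI)
    fix k show "zclosed (Y k)" unfolding Y_def by (rule YLc)
    show "Y k \<subset> M" unfolding Y_def by (rule YLp)
  next
    fix x assume x: "x \<in> M - (\<Union>k. Y k)"
    show "zclosure {act g x | g. g \<in> carrier G} = M"
    proof (rule ccontr)
      assume "\<not> ?thesis"
      then obtain L where "x \<in> YL L" using bad x by blast
      then have "x \<in> Y (to_nat L)" unfolding Y_def by simp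
      then show False using x by blast
    qed
  qed
qed

end
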